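(* Let $L$ be a $\kappa$-frame. Every quotient $L/C$ ($C\in\mathbb{C}L$) of $L$ is d-reduced if and only if $L$ is Boolean (every element of $L$ has a complement).
   Context: $\kappa$ is a fixed regular cardinal; a $\kappa$-frame is a bounded distributive lattice having joins of all subsets of cardinality $<\kappa$ and satisfying the frame distributive law for such joins. A congruence is an equivalence relation that is a sub-$\kappa$-frame of $L\times L$; $\mathbb{C}L$ is the set of congruences and $L/C$ the quotient $\kappa$-frame. A $\kappa$-frame $M$ is d-reduced if $\mathfrak{D}_M=\{(a,b)\mid\forall x\in M:\ a\wedge x=0\iff b\wedge x=0\}$ is the diagonal. *)

theory Defs
  imports Main
begin

text \<open>The regular cardinal kappa is a cardinal order relation k.\<close>

record 'a frm =
  carrier :: "'a set"
  le :: "'a \<Rightarrow> 'a \<Rightarrow> bool"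

definition is_lub :: "'a frm \<Rightarrow> 'a set \<Rightarrow> 'a \<Rightarrow> bool" where
  "is_lub L S j \<longleftrightarrow> j \<in> carrier L \<and> (\<forall>s\<in>S. le L s j) \<and>
     (\<forall>u\<in>carrier L. (\<forall>s\<in>S. le L s u) \<longrightarrow> le L j u)"

definition is_glb :: "'a frm \<Rightarrow> 'a set \<Rightarrow> 'a \<Rightarrow> bool" where
  "is_glb L S m \<longleftrightarrow> m \<in> carrier L \<and> (\<forall>s\<in>S. le L m s) \<and>
     (\<forall>u\<in>carrier L. (\<forall>s\<in>S. le L u s) \<longrightarrow> le L u m)"

definition fjoin :: "'a frm \<Rightarrow> 'a set \<Rightarrow> 'a" where
  "fjoin L S = (THE j. is_lub L S j)"

definition fmeet :: "'a frm \<Rightarrow> 'a \<Rightarrow> 'a \<Rightarrow> 'a" where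
  "fmeet L a b = (THE m. is_glb L {a, b} m)"

definition fbot :: "'a frm \<Rightarrow> 'a" where
  "fbot L = fjoin L {}"

definition ftop :: "'a frm \<Rightarrow> 'a" where
  "ftop L = (THE t. is_glb L {} t)"

definition small :: "'k rel \<Rightarrow> 'b set \<Rightarrow> bool" where
  "small k S \<longleftrightarrow> (card_of S, k) \<in> ordLess"

definition kframe :: "'k rel \<Rightarrow> 'a frm \<Rightarrow> bool" where
  "kframe k L \<longleftrightarrow>
     (\<forall>a\<in>carrier L. le L a a) \<and>
     (\<forall>a\<in>carrier L. \<forall>b\<in>carrier L. le L a b \<and> le L b a \<longrightarrow> a = b) \<and>
     (\<forall>a\<in>carrier L. \<forall>b\<in>carrier L. \<forall>c\<in>carrier L. le L a b \<and> le L b c \<longrightarrow> le L a c) \<and>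
     (\<exists>t. is_glb L {} t) \<and>
     (\<forall>a\<in>carrier L. \<forall>b\<in>carrier L. \<exists>m. is_glb L {a, b} m) \<and>
     (\<forall>S. S \<subseteq> carrier L \<and> small k S \<longrightarrow> (\<exists>j. is_lub L S j)) \<and>
     (\<forall>a\<in>carrier L. \<forall>S. S \<subseteq> carrier L \<and> small k S \<longrightarrow>
        fmeet L a (fjoin L S) = fjoin L ((\<lambda>s. fmeet L a s) ` S))"

text \<open>Congruence: an equivalence relation on the carrier that is a sub-kappa-frame
of L x L (operations in L x L being componentwise).\<close>
definition kcongruence :: "'k rel \<Rightarrow> 'a frm \<Rightarrow> ('a \<times> 'a) set \<Rightarrow> bool" where
  "kcongruence k L C \<longleftrightarrow>
     equiv (carrier L) C \<and>
     (ftop L, ftop L) \<in> C \<and>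
     (\<forall>a b c d. (a, b) \<in> C \<and> (c, d) \<in> C \<longrightarrow> (fmeet L a c, fmeet L b d) \<in> C) \<and>
     (\<forall>S. S \<subseteq> C \<and> small k S \<longrightarrow> (fjoin L (fst ` S), fjoin L (snd ` S)) \<in> C)"

definition quot :: "'a frm \<Rightarrow> ('a \<times> 'a) set \<Rightarrow> 'a set frm" where
  "quot L C = \<lparr> carrier = carrier L // C,
                le = (\<lambda>X Y. \<exists>a\<in>X. \<exists>b\<in>Y. (fmeet L a b, a) \<in> C) \<rparr>"

definition dcong :: "'a frm \<Rightarrow> ('a \<times> 'a) set" where
  "dcong M = {(a, b). a \<in> carrier M \<and> b \<in> carrier M \<and>
     (\<forall>x\<in>carrier M. fmeet M a x = fbot M \<longleftrightarrow> fmeet M b x = fbot M)}"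

definition d_reduced :: "'a frm \<Rightarrow> bool" where
  "d_reduced M \<longleftrightarrow> dcong M = Id_on (carrier M)"

definition boolean :: "'a frm \<Rightarrow> bool" where
  "boolean L \<longleftrightarrow> (\<forall>a\<in>carrier L. \<exists>b\<in>carrier L.
     fmeet L a b = fbot L \<and> fjoin L {a, b} = ftop L)"

end

theory Submission
  imports Defs
begin

lemma small_finite: "Cinfinite k \<Longrightarrow> finite S \<Longrightarrow> small k S"
  unfolding small_def
  by (metis card_of_Well_order Field_card_of cinfinite_def card_order_on_well_order_on finite_ordLess_infinite)

lemma small_image: "small k S \<Longrightarrow> small k (f ` S)"
  unfolding small_def using card_of_image ordLeq_ordLess_trans by blast

lemma glb_THE:
  assumes "is_glb M S m" "\<forall>X\<in>carrier M. \<forall>Y\<in>carrier M. le M X Y \<and> le M Y X \<longrightarrow> X = Y"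
  shows "(THE m. is_glb M S m) = m"
  using assms unfolding is_glb_def by (intro the_equality) blast+

lemma lub_THE:
  assumes "is_lub M S m" "\<forall>X\<in>carrier M. \<forall>Y\<in>carrier M. le M X Y \<and> le M Y X \<longrightarrow> X = Y"
  shows "(THE m. is_lub M S m) = m"
  using assms unfolding is_lub_def by (intro the_equality) blast+

locale kf =
  fixes k :: "'k rel" and L :: "'a frm"
  assumes cinf: "Cinfinite k" and kfr: "kframe k L"
begin

abbreviation lq (infix "\<sqsubseteq>" 50) where "x \<sqsubseteq> y \<equiv> le L x y"
abbreviation mt (infixl "\<sqinter>" 70) where "x \<sqinter> y \<equiv> fmeet L x y"
abbreviation jn (infixl "\<squnion>" 65) where "x \<squnion> y \<equiv> fjoin L {x, y}"
abbreviation "A \<equiv> carrier L"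
abbreviation "bt \<equiv> fbot L"
abbreviation "tp \<equiv> ftop L"

lemmas K = kfr[unfolded kframe_def]
lemmas K1 = conjunct1[OF K]
lemmas K2 = conjunct1[OF conjunct2[OF K]]
lemmas K3 = conjunct1[OF conjunct2[OF conjunct2[OF K]]]
lemmas K4 = conjunct1[OF conjunct2[OF conjunct2[OF conjunct2[OF K]]]]
lemmas K5 = conjunct1[OF conjunct2[OF conjunct2[OF conjunct2[OF conjunct2[OF K]]]]]
lemmas K6 = conjunct1[OF conjunct2[OF conjunct2[OF conjunct2[OF conjunct2[OF conjunct2[OF K]]]]]]
lemmas K7 = conjunct2[OF conjunct2[OF conjunct2[OF conjunct2[OF conjunct2[OF conjunct2[OF K]]]]]]

lemma refl: "x \<in> A \<Longrightarrow> x \<sqsubseteq> x" using K1 by blast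
lemma antisym: "x \<in> A \<Longrightarrow> y \<in> A \<Longrightarrow> x \<sqsubseteq> y \<Longrightarrow> y \<sqsubseteq> x \<Longrightarrow> x = y"
  using K2 by blast
lemma trans: "x \<in> A \<Longrightarrow> y \<in> A \<Longrightarrow> z \<in> A \<Longrightarrow> x \<sqsubseteq> y \<Longrightarrow> y \<sqsubseteq> z \<Longrightarrow> x \<sqsubseteq> z"
  using K3 by blast

lemma antisymL: "\<forall>X\<in>carrier L. \<forall>Y\<in>carrier L. le L X Y \<and> le L Y X \<longrightarrow> X = Y"
  using antisym by blast

lemma meet_glb: "a \<in> A \<Longrightarrow> b \<in> A \<Longrightarrow> is_glb L {a,b} (a \<sqinter> b)"
proof -
  assume "a \<in> A" "b \<in> A"
  then obtain m where "is_glb L {a,b} m" using K5 by blast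
  then show ?thesis unfolding fmeet_def using glb_THE[OF _ antisymL] by simp
qed

lemma fjoin_lub: "S \<subseteq> A \<Longrightarrow> small k S \<Longrightarrow> is_lub L S (fjoin L S)"
proof -
  assume "S \<subseteq> A" "small k S"
  then obtain m where "is_lub L S m" using K6 by blast
  then show ?thesis unfolding fjoin_def using lub_THE[OF _ antisymL] by simp
qed

lemma top_glb: "is_glb L {} tp"
proof -
  obtain m where "is_glb L {} m" using K4 by blast
  then show ?thesis unfolding ftop_def using glb_THE[OF _ antisymL] by simp
qed

lemma bot_lub: "is_lub L {} bt"
  unfolding fbot_def by (rule fjoin_lub) (simp_all add: small_finite[OF cinf])

lemma small2: "small k {x, y}" by (rule small_finite[OF cinf]) simp

lemma fjoin_closed: "S \<subseteq> A \<Longrightarrow> small k S \<Longrightarrow> fjoin L S \<in> A"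
  using fjoin_lub unfolding is_lub_def by blast
lemma fjoin_ub: "S \<subseteq> A \<Longrightarrow> small k S \<Longrightarrow> s \<in> S \<Longrightarrow> s \<sqsubseteq> fjoin L S"
  using fjoin_lub unfolding is_lub_def by blast
lemma fjoin_least: "S \<subseteq> A \<Longrightarrow> small k S \<Longrightarrow> u \<in> A \<Longrightarrow> (\<And>s. s \<in> S \<Longrightarrow> s \<sqsubseteq> u) \<Longrightarrow> fjoin L S \<sqsubseteq> u"
  using fjoin_lub unfolding is_lub_def by blast

lemma meet_closed[simp]: "a \<in> A \<Longrightarrow> b \<in> A \<Longrightarrow> a \<sqinter> b \<in> A"
  using meet_glb unfolding is_glb_def by blast
lemma meet_lb1: "a \<in> A \<Longrightarrow> b \<in> A \<Longrightarrow> a \<sqinter> b \<sqsubseteq> a"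
  using meet_glb unfolding is_glb_def by blast
lemma meet_lb2: "a \<in> A \<Longrightarrow> b \<in> A \<Longrightarrow> a \<sqinter> b \<sqsubseteq> b"
  using meet_glb unfolding is_glb_def by blast
lemma meet_gr: "a \<in> A \<Longrightarrow> b \<in> A \<Longrightarrow> u \<in> A \<Longrightarrow> u \<sqsubseteq> a \<Longrightarrow> u \<sqsubseteq> b \<Longrightarrow> u \<sqsubseteq> a \<sqinter> b"
  using meet_glb unfolding is_glb_def by blast

lemma join_closed[simp]: "a \<in> A \<Longrightarrow> b \<in> A \<Longrightarrow> a \<squnion> b \<in> A"
  by (rule fjoin_closed) (auto simp: small2)
lemma join_ub1: "a \<in> A \<Longrightarrow> b \<in> A \<Longrightarrow> a \<sqsubseteq> a \<squnion> b"
  by (rule fjoin_ub) (auto simp: small2)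
lemma join_ub2: "a \<in> A \<Longrightarrow> b \<in> A \<Longrightarrow> b \<sqsubseteq> a \<squnion> b"
  by (rule fjoin_ub) (auto simp: small2)
lemma join_least: "a \<in> A \<Longrightarrow> b \<in> A \<Longrightarrow> u \<in> A \<Longrightarrow> a \<sqsubseteq> u \<Longrightarrow> b \<sqsubseteq> u \<Longrightarrow> a \<squnion> b \<sqsubseteq> u"
  by (rule fjoin_least) (auto simp: small2)

lemma bot_in[simp]: "bt \<in> A" using bot_lub unfolding is_lub_def by blast
lemma bot_le: "u \<in> A \<Longrightarrow> bt \<sqsubseteq> u" using bot_lub unfolding is_lub_def by blast
lemma top_in[simp]: "tp \<in> A" using top_glb unfolding is_glb_def by blast
lemma le_top: "u \<in> A \<Longrightarrow> u \<sqsubseteq> tp" using top_glb unfolding is_glb_def by blast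

lemmas ord = refl meet_lb1 meet_lb2 meet_gr join_ub1 join_ub2 join_least bot_le le_top

lemma distrib: "a \<in> A \<Longrightarrow> b \<in> A \<Longrightarrow> c \<in> A \<Longrightarrow> a \<sqinter> (b \<squnion> c) = (a \<sqinter> b) \<squnion> (a \<sqinter> c)"
proof -
  assume h: "a \<in> A" "b \<in> A" "c \<in> A"
  have "a \<sqinter> fjoin L {b,c} = fjoin L ((\<lambda>s. a \<sqinter> s) ` {b,c})"
    by (rule K7[rule_format]) (simp_all add: small2 h)
  then show ?thesis by simp
qed

lemma meet_comm: "a \<in> A \<Longrightarrow> b \<in> A \<Longrightarrow> a \<sqinter> b = b \<sqinter> a"
  by (rule antisym) (simp_all add: meet_gr meet_lb1 meet_lb2)
lemma join_comm: "a \<in> A \<Longrightarrow> b \<in> A \<Longrightarrow> a \<squnion> b = b \<squnion> a"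
  by (simp add: insert_commute)
lemma meet_assoc: "a \<in> A \<Longrightarrow> b \<in> A \<Longrightarrow> c \<in> A \<Longrightarrow> a \<sqinter> (b \<sqinter> c) = (a \<sqinter> b) \<sqinter> c"
proof -
  assume h: "a \<in> A" "b \<in> A" "c \<in> A"
  have 1: "a \<sqinter> (b \<sqinter> c) \<sqsubseteq> b" by (rule trans[where y="b \<sqinter> c"]) (simp_all add: h meet_lb1 meet_lb2 join_ub1 join_ub2)
  have 2: "a \<sqinter> (b \<sqinter> c) \<sqsubseteq> c" by (rule trans[where y="b \<sqinter> c"]) (simp_all add: h meet_lb1 meet_lb2 join_ub1 join_ub2)
  have 3: "(a \<sqinter> b) \<sqinter> c \<sqsubseteq> a" by (rule trans[where y="a \<sqinter> b"]) (simp_all add: h meet_lb1 meet_lb2 join_ub1 join_ub2)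
  have 4: "(a \<sqinter> b) \<sqinter> c \<sqsubseteq> b" by (rule trans[where y="a \<sqinter> b"]) (simp_all add: h meet_lb1 meet_lb2 join_ub1 join_ub2)
  show ?thesis using h 1 2 3 4
    by (intro antisym) (simp_all add: meet_gr meet_lb1 meet_lb2)
qed
lemma join_assoc: "a \<in> A \<Longrightarrow> b \<in> A \<Longrightarrow> c \<in> A \<Longrightarrow> a \<squnion> (b \<squnion> c) = (a \<squnion> b) \<squnion> c"
proof -
  assume h: "a \<in> A" "b \<in> A" "c \<in> A"
  have 1: "b \<sqsubseteq> (a \<squnion> b) \<squnion> c" by (rule trans[where y="a \<squnion> b"]) (simp_all add: h meet_lb1 meet_lb2 join_ub1 join_ub2)
  have 2: "a \<sqsubseteq> (a \<squnion> b) \<squnion> c" by (rule trans[where y="a \<squnion> b"]) (simp_all add: h meet_lb1 meet_lb2 join_ub1 join_ub2)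
  have 3: "b \<sqsubseteq> a \<squnion> (b \<squnion> c)" by (rule trans[where y="b \<squnion> c"]) (simp_all add: h meet_lb1 meet_lb2 join_ub1 join_ub2)
  have 4: "c \<sqsubseteq> a \<squnion> (b \<squnion> c)" by (rule trans[where y="b \<squnion> c"]) (simp_all add: h meet_lb1 meet_lb2 join_ub1 join_ub2)
  show ?thesis using h 1 2 3 4
    by (intro antisym) (simp_all add: join_least join_ub1 join_ub2)
qed
lemma meet_absorb: "a \<in> A \<Longrightarrow> b \<in> A \<Longrightarrow> a \<sqsubseteq> b \<Longrightarrow> a \<sqinter> b = a"
  by (rule antisym) (simp_all add: meet_gr meet_lb1 refl)
lemma join_absorb: "a \<in> A \<Longrightarrow> b \<in> A \<Longrightarrow> a \<sqsubseteq> b \<Longrightarrow> a \<squnion> b = b"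
  by (rule antisym) (simp_all add: join_least join_ub2 refl)
lemma le_meet_iff: "a \<in> A \<Longrightarrow> b \<in> A \<Longrightarrow> a \<sqsubseteq> b \<longleftrightarrow> a \<sqinter> b = a"
  by (metis meet_absorb meet_lb2)

lemma bot_meet[simp]: "u \<in> A \<Longrightarrow> bt \<sqinter> u = bt" by (simp add: bot_le meet_absorb)
lemma meet_bot[simp]: "u \<in> A \<Longrightarrow> u \<sqinter> bt = bt" by (metis bot_meet bot_in meet_comm)
lemma meet_top[simp]: "u \<in> A \<Longrightarrow> u \<sqinter> tp = u" by (simp add: le_top meet_absorb)
lemma top_meet[simp]: "u \<in> A \<Longrightarrow> tp \<sqinter> u = u" by (metis meet_top top_in meet_comm)
lemma bot_join[simp]: "u \<in> A \<Longrightarrow> bt \<squnion> u = u" by (simp add: bot_le join_absorb)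
lemma join_bot[simp]: "u \<in> A \<Longrightarrow> u \<squnion> bt = u" by (metis bot_join bot_in join_comm)
lemma top_join[simp]: "u \<in> A \<Longrightarrow> tp \<squnion> u = tp" by (metis join_absorb join_comm le_top top_in)
lemma meet_idem[simp]: "u \<in> A \<Longrightarrow> u \<sqinter> u = u" by (simp add: refl meet_absorb)

lemma distrib2: "a \<in> A \<Longrightarrow> b \<in> A \<Longrightarrow> c \<in> A \<Longrightarrow> (b \<squnion> c) \<sqinter> a = (b \<sqinter> a) \<squnion> (c \<sqinter> a)"
  by (simp add: distrib meet_comm)

lemma dual_distrib: "y \<in> A \<Longrightarrow> d \<in> A \<Longrightarrow> j \<in> A \<Longrightarrow> (y \<squnion> j) \<sqinter> (d \<squnion> j) = (y \<sqinter> d) \<squnion> j"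
proof -
  assume h: "y \<in> A" "d \<in> A" "j \<in> A"
  have "(y \<squnion> j) \<sqinter> (d \<squnion> j) = (y \<sqinter> (d \<squnion> j)) \<squnion> (j \<sqinter> (d \<squnion> j))"
    using h by (simp add: distrib2)
  also have "j \<sqinter> (d \<squnion> j) = j" using h by (simp add: join_ub2 meet_absorb)
  also have "y \<sqinter> (d \<squnion> j) = (y \<sqinter> d) \<squnion> (y \<sqinter> j)" using h by (simp add: distrib)
  also have "(y \<sqinter> d) \<squnion> (y \<sqinter> j) \<squnion> j = (y \<sqinter> d) \<squnion> ((y \<sqinter> j) \<squnion> j)" using h by (simp add: join_assoc)
  also have "(y \<sqinter> j) \<squnion> j = j" using h by (simp add: join_absorb meet_lb2)
  finally show ?thesis .
qed

end

locale kfc = kf k L for k :: "'k rel" and L :: "'a frm" +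
  fixes C :: "('a \<times> 'a) set"
  assumes cong: "kcongruence k L C"
begin

lemmas KC = cong[unfolded kcongruence_def]
lemma eqv: "equiv A C" using KC by (rule conjunct1)
lemma C_sub: "(x,y) \<in> C \<Longrightarrow> x \<in> A \<and> y \<in> A"
  using eqv unfolding equiv_def refl_on_def by blast
lemma C_refl: "x \<in> A \<Longrightarrow> (x,x) \<in> C"
  using eqv unfolding equiv_def refl_on_def by blast
lemma C_sym: "(x,y) \<in> C \<Longrightarrow> (y,x) \<in> C"
  using eqv unfolding equiv_def sym_def by blast
lemma C_trans: "(x,y) \<in> C \<Longrightarrow> (y,z) \<in> C \<Longrightarrow> (x,z) \<in> C"
  using eqv unfolding equiv_def trans_def by blast
lemma C_meet: "(a,b) \<in> C \<Longrightarrow> (c,d) \<in> C \<Longrightarrow> (a \<sqinter> c, b \<sqinter> d) \<in> C"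
  using conjunct1[OF conjunct2[OF conjunct2[OF KC]]] by blast
lemma C_join: "(a,b) \<in> C \<Longrightarrow> (c,d) \<in> C \<Longrightarrow> (a \<squnion> c, b \<squnion> d) \<in> C"
proof -
  assume h: "(a,b) \<in> C" "(c,d) \<in> C"
  have all: "\<forall>S. S \<subseteq> C \<and> small k S \<longrightarrow> (fjoin L (fst ` S), fjoin L (snd ` S)) \<in> C"
    using conjunct2[OF conjunct2[OF conjunct2[OF KC]]] .
  have pre: "{(a,b),(c,d)} \<subseteq> C \<and> small k {(a,b),(c,d)}"
    using h small_finite[OF cinf, of "{(a,b),(c,d)}"] by simp
  have "(fjoin L (fst ` {(a,b),(c,d)}), fjoin L (snd ` {(a,b),(c,d)})) \<in> C"
    using all[THEN spec, of "{(a,b),(c,d)}"] pre by (rule mp)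
  then show ?thesis by simp
qed

abbreviation cls where "cls x \<equiv> C `` {x}"
abbreviation Q where "Q \<equiv> quot L C"

lemma carrierQ: "carrier Q = A // C" by (simp add: quot_def)
lemma cls_in: "x \<in> A \<Longrightarrow> cls x \<in> carrier Q" by (simp add: carrierQ quotientI)
lemma Q_cases: "X \<in> carrier Q \<Longrightarrow> (\<And>x. x \<in> A \<Longrightarrow> X = cls x \<Longrightarrow> P) \<Longrightarrow> P"
  by (auto simp: carrierQ elim: quotientE)
lemma cls_eq: "x \<in> A \<Longrightarrow> y \<in> A \<Longrightarrow> cls x = cls y \<longleftrightarrow> (x,y) \<in> C"
  using eq_equiv_class_iff[OF eqv] by blast

lemma Q_le: "x \<in> A \<Longrightarrow> y \<in> A \<Longrightarrow> le Q (cls x) (cls y) \<longleftrightarrow> (x \<sqinter> y, x) \<in> C"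
proof
  assume h: "x \<in> A" "y \<in> A" "le Q (cls x) (cls y)"
  then obtain a b where ab: "(x,a) \<in> C" "(y,b) \<in> C" "(a \<sqinter> b, a) \<in> C"
    by (auto simp: quot_def)
  have "(x \<sqinter> y, a \<sqinter> b) \<in> C" using C_meet ab by blast
  then have "(x \<sqinter> y, a) \<in> C" using C_trans ab by blast
  then show "(x \<sqinter> y, x) \<in> C" using C_trans C_sym ab by blast
next
  assume h: "x \<in> A" "y \<in> A" "(x \<sqinter> y, x) \<in> C"
  then show "le Q (cls x) (cls y)" unfolding quot_def using C_refl by auto
qed

lemma Q_antisym: "\<forall>X\<in>carrier Q. \<forall>Y\<in>carrier Q. le Q X Y \<and> le Q Y X \<longrightarrow> X = Y"
proof (intro ballI impI)
  fix X Y assume X: "X \<in> carrier Q" and Y: "Y \<in> carrier Q" and le: "le Q X Y \<and> le Q Y X"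
  from X obtain x where x: "x \<in> A" "X = cls x" by (rule Q_cases)
  from Y obtain y where y: "y \<in> A" "Y = cls y" by (rule Q_cases)
  have 1: "(x \<sqinter> y, x) \<in> C" "(y \<sqinter> x, y) \<in> C" using le x y Q_le by auto
  have "x \<sqinter> y = y \<sqinter> x" using x y meet_comm by blast
  then have "(x, y) \<in> C" using 1 C_sym C_trans by metis
  then show "X = Y" using x y cls_eq by blast
qed

lemma Q_meet: "x \<in> A \<Longrightarrow> y \<in> A \<Longrightarrow> fmeet Q (cls x) (cls y) = cls (x \<sqinter> y)"
proof -
  assume h: "x \<in> A" "y \<in> A"
  have "is_glb Q {cls x, cls y} (cls (x \<sqinter> y))"
    unfolding is_glb_def
  proof (intro conjI ballI impI)
    show "cls (x \<sqinter> y) \<in> carrier Q" using h by (simp add: cls_in)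
  next
    fix s assume "s \<in> {cls x, cls y}"
    moreover have "le Q (cls (x \<sqinter> y)) (cls x)"
      using h by (subst Q_le) (simp_all add: meet_lb1 meet_absorb C_refl)
    moreover have "le Q (cls (x \<sqinter> y)) (cls y)"
      using h by (subst Q_le) (simp_all add: meet_lb2 meet_absorb C_refl)
    ultimately show "le Q (cls (x \<sqinter> y)) s" by blast
  next
    fix U assume U: "U \<in> carrier Q" and lb: "\<forall>s\<in>{cls x, cls y}. le Q U s"
    from U obtain u where u: "u \<in> A" "U = cls u" by (rule Q_cases)
    have 1: "(u \<sqinter> x, u) \<in> C" "(u \<sqinter> y, u) \<in> C" using lb u h Q_le by auto
    have "((u \<sqinter> x) \<sqinter> y, u \<sqinter> y) \<in> C" using C_meet[OF 1(1) C_refl[OF h(2)]] .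
    then have "((u \<sqinter> x) \<sqinter> y, u) \<in> C" using 1(2) C_trans by blast
    moreover have "u \<sqinter> (x \<sqinter> y) = (u \<sqinter> x) \<sqinter> y" using u h meet_assoc by blast
    ultimately show "le Q U (cls (x \<sqinter> y))" using u h Q_le by simp
  qed
  then show ?thesis unfolding fmeet_def using glb_THE[OF _ Q_antisym] by blast
qed

lemma Q_bot: "fbot Q = cls bt"
proof -
  have "is_lub Q {} (cls bt)"
    unfolding is_lub_def
  proof (intro conjI ballI impI)
    show "cls bt \<in> carrier Q" by (simp add: cls_in)
  next
    fix s :: "'a set" assume "s \<in> {}" then show "le Q s (cls bt)" by simp
  next
    fix U assume U: "U \<in> carrier Q"
    from U obtain u where u: "u \<in> A" "U = cls u" by (rule Q_cases)
    show "le Q (cls bt) U" using u Q_le C_refl by simp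
  qed
  then show ?thesis unfolding fbot_def fjoin_def using lub_THE[OF _ Q_antisym] by blast
qed

lemma boolean_dred: "boolean L \<Longrightarrow> d_reduced Q"
proof -
  assume B: "boolean L"
  have "dcong Q \<subseteq> Id_on (carrier Q)"
  proof
    fix p assume p: "p \<in> dcong Q"
    then obtain X Y where XY: "p = (X,Y)" "X \<in> carrier Q" "Y \<in> carrier Q"
      "\<forall>Z\<in>carrier Q. fmeet Q X Z = fbot Q \<longleftrightarrow> fmeet Q Y Z = fbot Q"
      unfolding dcong_def by blast
    from XY obtain x where x: "x \<in> A" "X = cls x" by (metis Q_cases)
    from XY obtain y where y: "y \<in> A" "Y = cls y" by (metis Q_cases)
    have key: "(x, x \<sqinter> y) \<in> C" 
      if x: "x \<in> A" and y: "y \<in> A" and H: "\<forall>Z\<in>carrier Q. fmeet Q (cls y) Z = fbot Q \<longrightarrow> fmeet Q (cls x) Z = fbot Q"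
      for x y
    proof -
      obtain y' where y': "y' \<in> A" "y \<sqinter> y' = bt" "y \<squnion> y' = tp"
        using B y unfolding boolean_def by blast
      have "fmeet Q (cls y) (cls y') = fbot Q" using y y' by (simp add: Q_meet Q_bot)
      then have "fmeet Q (cls x) (cls y') = fbot Q" using H cls_in[OF y'(1)] by blast
      then have "cls (x \<sqinter> y') = cls bt" using x y' by (simp add: Q_meet Q_bot)
      then have c: "(x \<sqinter> y', bt) \<in> C" using x y' cls_eq by simp
      have "((x \<sqinter> y) \<squnion> (x \<sqinter> y'), (x \<sqinter> y) \<squnion> bt) \<in> C"
        using C_join[OF C_refl c] x y y' by simp
      moreover have "(x \<sqinter> y) \<squnion> (x \<sqinter> y') = x" using x y y' by (simp add: distrib[symmetric])
      ultimately show ?thesis using x y by simp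
    qed
    have 1: "(x, x \<sqinter> y) \<in> C" using key[OF x(1) y(1)] XY x y by blast
    have 2: "(y, y \<sqinter> x) \<in> C" using key[OF y(1) x(1)] XY x y by blast
    have "(x, y) \<in> C" using 1 2 meet_comm[OF x(1) y(1)] C_sym C_trans by metis
    then have "X = Y" using x y cls_eq by blast
    then show "p \<in> Id_on (carrier Q)" using XY by (simp add: Id_on_def)
  qed
  moreover have "Id_on (carrier Q) \<subseteq> dcong Q" unfolding dcong_def Id_on_def by blast
  ultimately show ?thesis unfolding d_reduced_def by blast
qed

end

context kf
begin

lemma key_le:
  assumes fA: "f ` S \<subseteq> A" and gA: "g ` S \<subseteq> A" and wA: "w ` S \<subseteq> A" and sm: "small k S"
    and eq: "\<And>p. p \<in> S \<Longrightarrow> f p \<squnion> w p = g p \<squnion> w p"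
  shows "fjoin L (f ` S) \<squnion> fjoin L (w ` S) \<sqsubseteq> fjoin L (g ` S) \<squnion> fjoin L (w ` S)"
proof -
  have smf: "small k (f ` S)" using small_image[OF sm] .
  have smg: "small k (g ` S)" using small_image[OF sm] .
  have smw: "small k (w ` S)" using small_image[OF sm] .
  define X where "X = fjoin L (f ` S)"
  define Y where "Y = fjoin L (g ` S)"
  define J where "J = fjoin L (w ` S)"
  have XA: "X \<in> A" unfolding X_def using fjoin_closed[OF fA smf] .
  have YA: "Y \<in> A" unfolding Y_def using fjoin_closed[OF gA smg] .
  have JA: "J \<in> A" unfolding J_def using fjoin_closed[OF wA smw] .
  have YJ: "Y \<squnion> J \<in> A" using YA JA by (rule join_closed)
  have 1: "Y \<sqsubseteq> Y \<squnion> J" using join_ub1[OF YA JA] .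
  have 2: "J \<sqsubseteq> Y \<squnion> J" using join_ub2[OF YA JA] .
  have "X \<sqsubseteq> Y \<squnion> J" unfolding X_def
  proof (rule fjoin_least[OF fA smf YJ])
    fix s assume "s \<in> f ` S"
    then obtain p where p: "p \<in> S" "s = f p" by blast
    have fp: "f p \<in> A" using fA p(1) by blast
    have gp: "g p \<in> A" using gA p(1) by blast
    have wp: "w p \<in> A" using wA p(1) by blast
    have "g p \<sqsubseteq> Y" unfolding Y_def by (rule fjoin_ub[OF gA smg]) (use p in blast)
    then have a1: "g p \<sqsubseteq> Y \<squnion> J" using trans[OF gp YA YJ _ 1] by blast
    have "w p \<sqsubseteq> J" unfolding J_def by (rule fjoin_ub[OF wA smw]) (use p in blast)
    then have a2: "w p \<sqsubseteq> Y \<squnion> J" using trans[OF wp JA YJ _ 2] by blast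
    have "g p \<squnion> w p \<sqsubseteq> Y \<squnion> J" using join_least[OF gp wp YJ a1 a2] .
    then have a3: "f p \<squnion> w p \<sqsubseteq> Y \<squnion> J" using eq[OF p(1)] by simp
    have "f p \<sqsubseteq> Y \<squnion> J" using trans[OF fp join_closed[OF fp wp] YJ join_ub1[OF fp wp] a3] .
    then show "s \<sqsubseteq> Y \<squnion> J" using p(2) by simp
  qed
  then have "X \<squnion> J \<sqsubseteq> Y \<squnion> J" using join_least[OF XA JA YJ _ 2] by blast
  then show ?thesis unfolding X_def Y_def J_def .
qed

end

context kf
begin

lemma join_single[simp]: "x \<in> A \<Longrightarrow> fjoin L {x} = x"
  using join_absorb[OF _ _ refl, of x] by simp
lemma join_idem: "x \<in> A \<Longrightarrow> x \<squnion> x = x" by simp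

lemma shift: "x \<in> A \<Longrightarrow> y \<in> A \<Longrightarrow> i \<in> A \<Longrightarrow> j \<in> A \<Longrightarrow> x \<squnion> i = y \<squnion> i \<Longrightarrow> x \<squnion> (i \<squnion> j) = y \<squnion> (i \<squnion> j)"
  by (metis join_assoc)
lemma shift2: "x \<in> A \<Longrightarrow> y \<in> A \<Longrightarrow> i \<in> A \<Longrightarrow> j \<in> A \<Longrightarrow> x \<squnion> j = y \<squnion> j \<Longrightarrow> x \<squnion> (i \<squnion> j) = y \<squnion> (i \<squnion> j)"
  by (metis shift join_comm)

lemma meet_mono2: "a \<in> A \<Longrightarrow> x \<in> A \<Longrightarrow> y \<in> A \<Longrightarrow> x \<sqsubseteq> y \<Longrightarrow> a \<sqinter> x \<sqsubseteq> a \<sqinter> y"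
  by (rule meet_gr) (simp_all add: meet_lb1 trans[OF _ _ _ meet_lb2])

lemma dred_boolean:
  assumes H: "\<forall>C. kcongruence k L C \<longrightarrow> d_reduced (quot L C)"
  shows "boolean L"
  unfolding boolean_def
proof
  fix a assume a: "a \<in> A"
  define I where "I = {i \<in> A. a \<sqinter> i = bt}"
  define C where "C = {(x,y). x \<in> A \<and> y \<in> A \<and> (\<exists>i\<in>I. x \<squnion> i = y \<squnion> i)}"
  have I_A: "i \<in> I \<Longrightarrow> i \<in> A" for i unfolding I_def by blast
  have I_bot: "bt \<in> I" unfolding I_def using a by simp
  have I_join: "i \<squnion> j \<in> I" if "i \<in> I" "j \<in> I" for i j
    using that a unfolding I_def by (simp add: distrib)
  have I_down: "x \<in> I" if "x \<in> A" "i \<in> I" "x \<sqsubseteq> i" for x i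
  proof -
    have "a \<sqinter> x \<sqsubseteq> a \<sqinter> i" using that a I_A meet_mono2 by blast
    then have "a \<sqinter> x \<sqsubseteq> bt" using that unfolding I_def by simp
    then show ?thesis using that a unfolding I_def by (simp add: antisym bot_le)
  qed
  have I_fjoin: "fjoin L T \<in> I" if T: "T \<subseteq> I" "small k T" for T
  proof -
    have TA: "T \<subseteq> A" using T I_A by blast
    have "a \<sqinter> fjoin L T = fjoin L ((\<lambda>s. a \<sqinter> s) ` T)"
      by (rule K7[rule_format]) (simp_all add: a TA T)
    also have "\<dots> = bt"
    proof (rule antisym)
      have sub: "(\<lambda>s. a \<sqinter> s) ` T \<subseteq> A" using TA a by auto
      show "fjoin L ((\<lambda>s. a \<sqinter> s) ` T) \<in> A" using sub small_image[OF T(2)] fjoin_closed by blast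
      show "fjoin L ((\<lambda>s. a \<sqinter> s) ` T) \<sqsubseteq> bt"
        by (rule fjoin_least) (use sub small_image[OF T(2)] T I_def refl in auto)
      show "bt \<sqsubseteq> fjoin L ((\<lambda>s. a \<sqinter> s) ` T)" using sub small_image[OF T(2)] fjoin_closed bot_le by blast
    qed simp
    finally show ?thesis unfolding I_def using TA T fjoin_closed by auto
  qed
  have zero: "(x, bt) \<in> C \<longleftrightarrow> x \<in> I" if x: "x \<in> A" for x
  proof
    assume "(x, bt) \<in> C"
    then obtain i where i: "i \<in> I" "x \<squnion> i = bt \<squnion> i" unfolding C_def by blast
    then have "x \<squnion> i = i" using I_A by simp
    then have "x \<sqsubseteq> i" using join_ub1[OF x I_A[OF i(1)]] by simp
    then show "x \<in> I" using I_down x i by blast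
  next
    assume "x \<in> I"
    then show "(x, bt) \<in> C" unfolding C_def using x by (auto intro!: bexI[of _ x])
  qed
  have congC: "kcongruence k L C"
    unfolding kcongruence_def
  proof (intro conjI allI impI)
    show "equiv A C"
    proof (rule equivI)
      show "C \<subseteq> A \<times> A" unfolding C_def by auto
      show "refl_on A C" unfolding refl_on_def C_def using I_bot by auto
      show "sym C" unfolding sym_def
      proof (intro allI impI)
        fix x y assume "(x,y) \<in> C"
        then obtain i where i: "x \<in> A" "y \<in> A" "i \<in> I" "x \<squnion> i = y \<squnion> i" unfolding C_def by blast
        then have "y \<squnion> i = x \<squnion> i" by simp
        then show "(y,x) \<in> C" unfolding C_def using i by blast
      qed
      show "trans C" unfolding trans_def
      proof (intro allI impI)
        fix x y z assume "(x,y) \<in> C" "(y,z) \<in> C"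
        then obtain i j where ij: "x \<in> A" "y \<in> A" "z \<in> A" "i \<in> I" "j \<in> I"
          "x \<squnion> i = y \<squnion> i" "y \<squnion> j = z \<squnion> j" unfolding C_def by blast
        have "x \<squnion> (i \<squnion> j) = y \<squnion> (i \<squnion> j)" using ij I_A shift by blast
        also have "\<dots> = z \<squnion> (i \<squnion> j)" using ij I_A shift2 by blast
        finally show "(x,z) \<in> C" unfolding C_def using ij I_join by blast
      qed
    qed
    show "(tp, tp) \<in> C" unfolding C_def using I_bot by auto
  next
    fix x y c d assume "(x, y) \<in> C \<and> (c, d) \<in> C"
    then obtain i j where ij: "x \<in> A" "y \<in> A" "c \<in> A" "d \<in> A" "i \<in> I" "j \<in> I"
      "x \<squnion> i = y \<squnion> i" "c \<squnion> j = d \<squnion> j" unfolding C_def by blast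
    have iA: "i \<in> A" "j \<in> A" using ij I_A by auto
    have e1: "x \<squnion> (i \<squnion> j) = y \<squnion> (i \<squnion> j)" using ij iA shift by blast
    have e2: "c \<squnion> (i \<squnion> j) = d \<squnion> (i \<squnion> j)" using ij iA shift2 by blast
    have "(x \<sqinter> c) \<squnion> (i \<squnion> j) = (x \<squnion> (i \<squnion> j)) \<sqinter> (c \<squnion> (i \<squnion> j))"
      using ij iA by (simp add: dual_distrib)
    also have "\<dots> = (y \<squnion> (i \<squnion> j)) \<sqinter> (d \<squnion> (i \<squnion> j))" using e1 e2 by simp
    also have "\<dots> = (y \<sqinter> d) \<squnion> (i \<squnion> j)" using ij iA by (simp add: dual_distrib)
    finally show "(x \<sqinter> c, y \<sqinter> d) \<in> C" unfolding C_def using ij I_join by auto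
  next
    fix S assume S: "S \<subseteq> C \<and> small k S"
    have SC: "S \<subseteq> C" and sm: "small k S" using S by auto
    define w where "w p = (SOME i. i \<in> I \<and> fst p \<squnion> i = snd p \<squnion> i)" for p
    have w: "w p \<in> I \<and> fst p \<squnion> w p = snd p \<squnion> w p" if "p \<in> S" for p
    proof -
      have "p \<in> C" using that SC by blast
      then have "\<exists>i. i \<in> I \<and> fst p \<squnion> i = snd p \<squnion> i" unfolding C_def by (cases p) (simp add: Bex_def)
      then show ?thesis unfolding w_def by (rule someI_ex)
    qed
    have CA: "C \<subseteq> A \<times> A" unfolding C_def by auto
    have fA: "fst ` S \<subseteq> A" using SC CA by auto
    have sA: "snd ` S \<subseteq> A" using SC CA by auto
    have wI: "w ` S \<subseteq> I" using w by blast
    have wA: "w ` S \<subseteq> A" using wI I_A by blast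
    have JI: "fjoin L (w ` S) \<in> I" using I_fjoin[OF wI small_image[OF sm]] .
    have le1: "fjoin L (fst ` S) \<squnion> fjoin L (w ` S) \<sqsubseteq> fjoin L (snd ` S) \<squnion> fjoin L (w ` S)"
      by (rule key_le[OF fA sA wA sm]) (use w in blast)
    have le2: "fjoin L (snd ` S) \<squnion> fjoin L (w ` S) \<sqsubseteq> fjoin L (fst ` S) \<squnion> fjoin L (w ` S)"
      by (rule key_le[OF sA fA wA sm]) (use w in metis)
    have XA: "fjoin L (fst ` S) \<in> A" using fjoin_closed[OF fA small_image[OF sm]] .
    have YA: "fjoin L (snd ` S) \<in> A" using fjoin_closed[OF sA small_image[OF sm]] .
    have JA: "fjoin L (w ` S) \<in> A" using JI I_A by blast
    have "fjoin L (fst ` S) \<squnion> fjoin L (w ` S) = fjoin L (snd ` S) \<squnion> fjoin L (w ` S)"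
      using antisym[OF join_closed[OF XA JA] join_closed[OF YA JA] le1 le2] .
    then show "(fjoin L (fst ` S), fjoin L (snd ` S)) \<in> C"
      unfolding C_def using XA YA JI by blast
  qed
  interpret q: kfc k L C by (rule kfc.intro[OF kf.intro[OF cinf kfr] kfc_axioms.intro[OF congC]])
  have dr: "d_reduced (quot L C)" using H congC by blast
  have "(C `` {a}, C `` {tp}) \<in> dcong (quot L C)"
    unfolding dcong_def
  proof (intro CollectI case_prodI conjI ballI)
    show "C `` {a} \<in> carrier (quot L C)" using a q.cls_in by blast
    show "C `` {tp} \<in> carrier (quot L C)" using q.cls_in by simp
    fix Z assume "Z \<in> carrier (quot L C)"
    then obtain z where z: "z \<in> A" "Z = C `` {z}" by (rule q.Q_cases)
    have "fmeet (quot L C) (C `` {a}) Z = fbot (quot L C) \<longleftrightarrow> (a \<sqinter> z, bt) \<in> C"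
      using z a by (simp add: q.Q_meet q.Q_bot q.cls_eq)
    also have "\<dots> \<longleftrightarrow> a \<sqinter> (a \<sqinter> z) = bt" using zero z a unfolding I_def by simp
    also have "\<dots> \<longleftrightarrow> a \<sqinter> z = bt" using z a by (simp add: meet_assoc)
    also have "\<dots> \<longleftrightarrow> (z, bt) \<in> C" using zero z unfolding I_def by simp
    also have "\<dots> \<longleftrightarrow> fmeet (quot L C) (C `` {tp}) Z = fbot (quot L C)"
      using z by (simp add: q.Q_meet q.Q_bot q.cls_eq)
    finally show "fmeet (quot L C) (C `` {a}) Z = fbot (quot L C) \<longleftrightarrow> fmeet (quot L C) (C `` {tp}) Z = fbot (quot L C)" .
  qed
  then have "(C `` {a}, C `` {tp}) \<in> Id_on (carrier (quot L C))" using dr unfolding d_reduced_def by simp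
  then have eq: "C `` {a} = C `` {tp}" by (simp add: Id_on_def)
  have "(a, tp) \<in> C" using q.cls_eq[OF a top_in] eq by simp
  then obtain i where i: "i \<in> I" "a \<squnion> i = tp \<squnion> i" unfolding C_def by blast
  have iA: "i \<in> A" "a \<sqinter> i = bt" using i(1) unfolding I_def by auto
  have "a \<squnion> i = tp" using i(2) iA(1) by simp
  then show "\<exists>b\<in>A. a \<sqinter> b = bt \<and> a \<squnion> b = tp" using iA by blast
qed

end

theorem mainTheorem16:
  fixes k :: "'k rel" and L :: "'a frm"
  assumes "Cinfinite k" and "regularCard k"
    and "kframe k L"
  shows "(\<forall>C. kcongruence k L C \<longrightarrow> d_reduced (quot L C)) \<longleftrightarrow> boolean L"
proof -
  interpret kf k L using assms(1,3) by (rule kf.intro)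
  show ?thesis
  proof
    assume H: "\<forall>C. kcongruence k L C \<longrightarrow> d_reduced (quot L C)"
    then show "boolean L" by (rule dred_boolean)
  next
    assume B: "boolean L"
    show "\<forall>C. kcongruence k L C \<longrightarrow> d_reduced (quot L C)"
    proof (intro allI impI)
      fix C assume "kcongruence k L C"
      then interpret kfc k L C by (rule kfc.intro[OF kf.intro[OF assms(1,3)] kfc_axioms.intro])
      show "d_reduced (quot L C)" using boolean_dred[OF B] .
    qed
  qed
qed

end
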